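(* Let $R$ be a commutative ring with $1$, let $M$ be an le-module over $R$, and suppose the natural map $\psi:\mathrm{Spec}(M)\to\mathrm{Spec}(R/Ann(M))$ is surjective. Then: (i) a subset $Y\subseteq\mathrm{Spec}(M)$ is an irreducible closed subset of $\mathrm{Spec}(M)$ if and only if $Y=V^*(p)$ for some $p\in\mathrm{Spec}(M)$; every irreducible closed subset of $\mathrm{Spec}(M)$ has a generic point; (ii) the correspondence $p\mapsto V^*(p)$ is a surjection of $\mathrm{Spec}(M)$ onto the set of irreducible closed subsets of $\mathrm{Spec}(M)$; (iii) the correspondence $V^*(p)\mapsto (p:e)/Ann(M)$ is a bijection of the set of irreducible components of $\mathrm{Spec}(M)$ onto the set of minimal prime ideals of $R/Ann(M)$.
   Context: An le-module over $R$ is a complete lattice $(M,\leq)$ with greatest element $e$, with a commutative monoid operation $+$ (identity $0_M$) satisfying $m+\bigvee_{i}m_i=\bigvee_i(m+m_i)$ for all families, and a map $R\times M\to M$, $(r,m)\mapsto rm$, such that for all $r,r_1,r_2\in R$, $m,m_1,m_2,m_i\in M$: $r(m_1+m_2)=rm_1+rm_2$; $(r_1+r_2)m\leq r_1m+r_2m$; $(r_1r_2)m=r_1(r_2m)$; $1_Rm=m$; $0_Rm=r0_M=0_M$; $r(\bigvee_i m_i)=\bigvee_i rm_i$. A submodule element is $n\in M$ with $n+n\leq n$ and $rn\leq n$ for all $r\in R$; it is proper if $n\neq e$. For $n\in M$ put $(n:e)=\{r\in R: re\leq n\}$, and $Ann(M)=(0_M:e)$. A prime submodule element is a proper submodule element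 $p$ such that for all $r\in R$, $n\in M$, $rn\leq p$ implies $r\in(p:e)$ or $n\leq p$; $\mathrm{Spec}(M)$ denotes the set of prime submodule elements. For a submodule element $n$, $V^*(n)=\{p\in\mathrm{Spec}(M):(n:e)\subseteq(p:e)\}$; the Zariski topology on $\mathrm{Spec}(M)$ has as closed sets exactly the sets $V^*(n)$, $n$ a submodule element. For $p\in\mathrm{Spec}(M)$, $(p:e)$ is a prime ideal containing $Ann(M)$ and the natural map is $\psi(p)=(p:e)/Ann(M)$. A generic point of a closed set $Y$ is $y\in Y$ with $Y=\overline{\{y\}}$; an irreducible component is a maximal irreducible subset. *)

theory Defs
  imports "HOL-Algebra.Algebra"
begin

text \<open>An le-module over the ring R: the complete lattice M is the type 'm (greatest
element e = Orderings.top), addition madd with identity z, and scalar action sm.\<close>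

definition le_module ::
  "('r, 'x) ring_scheme \<Rightarrow> ('m::complete_lattice \<Rightarrow> 'm \<Rightarrow> 'm) \<Rightarrow> 'm \<Rightarrow> ('r \<Rightarrow> 'm \<Rightarrow> 'm) \<Rightarrow> bool"
where
  "le_module R madd z sm \<longleftrightarrow>
     (\<forall>a b c. madd (madd a b) c = madd a (madd b c)) \<and>
     (\<forall>a b. madd a b = madd b a) \<and>
     (\<forall>a. madd z a = a) \<and>
     (\<forall>m S. S \<noteq> {} \<longrightarrow> madd m (Complete_Lattices.Sup S) = Complete_Lattices.Sup (madd m ` S)) \<and>
     (\<forall>r\<in>carrier R. \<forall>m1 m2. sm r (madd m1 m2) = madd (sm r m1) (sm r m2)) \<and>
     (\<forall>r1\<in>carrier R. \<forall>r2\<in>carrier R. \<forall>m.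
        sm (r1 \<oplus>\<^bsub>R\<^esub> r2) m \<le> madd (sm r1 m) (sm r2 m)) \<and>
     (\<forall>r1\<in>carrier R. \<forall>r2\<in>carrier R. \<forall>m.
        sm (r1 \<otimes>\<^bsub>R\<^esub> r2) m = sm r1 (sm r2 m)) \<and>
     (\<forall>m. sm \<one>\<^bsub>R\<^esub> m = m) \<and>
     (\<forall>m. sm \<zero>\<^bsub>R\<^esub> m = z) \<and>
     (\<forall>r\<in>carrier R. sm r z = z) \<and>
     (\<forall>r\<in>carrier R. \<forall>S. S \<noteq> {} \<longrightarrow> sm r (Complete_Lattices.Sup S) = Complete_Lattices.Sup (sm r ` S))"

definition submodule_elem ::
  "('r, 'x) ring_scheme \<Rightarrow> ('m::complete_lattice \<Rightarrow> 'm \<Rightarrow> 'm) \<Rightarrow> ('r \<Rightarrow> 'm \<Rightarrow> 'm) \<Rightarrow> 'm \<Rightarrow> bool"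
where
  "submodule_elem R madd sm n \<longleftrightarrow> madd n n \<le> n \<and> (\<forall>r\<in>carrier R. sm r n \<le> n)"

definition colon_e :: "('r, 'x) ring_scheme \<Rightarrow> ('r \<Rightarrow> 'm::complete_lattice \<Rightarrow> 'm) \<Rightarrow> 'm \<Rightarrow> 'r set"
where
  "colon_e R sm n = {r \<in> carrier R. sm r Orderings.top \<le> n}"

definition Ann :: "('r, 'x) ring_scheme \<Rightarrow> ('r \<Rightarrow> 'm::complete_lattice \<Rightarrow> 'm) \<Rightarrow> 'm \<Rightarrow> 'r set"
where
  "Ann R sm z = colon_e R sm z"

definition prime_submodule_elem ::
  "('r, 'x) ring_scheme \<Rightarrow> ('m::complete_lattice \<Rightarrow> 'm \<Rightarrow> 'm) \<Rightarrow> ('r \<Rightarrow> 'm \<Rightarrow> 'm) \<Rightarrow> 'm \<Rightarrow> bool"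
where
  "prime_submodule_elem R madd sm p \<longleftrightarrow>
     submodule_elem R madd sm p \<and> p \<noteq> Orderings.top \<and>
     (\<forall>r\<in>carrier R. \<forall>n. sm r n \<le> p \<longrightarrow> r \<in> colon_e R sm p \<or> n \<le> p)"

definition Spec_M ::
  "('r, 'x) ring_scheme \<Rightarrow> ('m::complete_lattice \<Rightarrow> 'm \<Rightarrow> 'm) \<Rightarrow> ('r \<Rightarrow> 'm \<Rightarrow> 'm) \<Rightarrow> 'm set"
where
  "Spec_M R madd sm = {p. prime_submodule_elem R madd sm p}"

definition Vstar ::
  "('r, 'x) ring_scheme \<Rightarrow> ('m::complete_lattice \<Rightarrow> 'm \<Rightarrow> 'm) \<Rightarrow> ('r \<Rightarrow> 'm \<Rightarrow> 'm) \<Rightarrow> 'm \<Rightarrow> 'm set"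
where
  "Vstar R madd sm n = {p \<in> Spec_M R madd sm. colon_e R sm n \<subseteq> colon_e R sm p}"

definition zariski_closed ::
  "('r, 'x) ring_scheme \<Rightarrow> ('m::complete_lattice \<Rightarrow> 'm \<Rightarrow> 'm) \<Rightarrow> ('r \<Rightarrow> 'm \<Rightarrow> 'm) \<Rightarrow> 'm set set"
where
  "zariski_closed R madd sm = {Vstar R madd sm n | n. submodule_elem R madd sm n}"

definition zariski_closure ::
  "('r, 'x) ring_scheme \<Rightarrow> ('m::complete_lattice \<Rightarrow> 'm \<Rightarrow> 'm) \<Rightarrow> ('r \<Rightarrow> 'm \<Rightarrow> 'm) \<Rightarrow> 'm set \<Rightarrow> 'm set"
where
  "zariski_closure R madd sm Y =
     Spec_M R madd sm \<inter> \<Inter>{F \<in> zariski_closed R madd sm. Y \<subseteq> F}"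

definition zariski_irreducible ::
  "('r, 'x) ring_scheme \<Rightarrow> ('m::complete_lattice \<Rightarrow> 'm \<Rightarrow> 'm) \<Rightarrow> ('r \<Rightarrow> 'm \<Rightarrow> 'm) \<Rightarrow> 'm set \<Rightarrow> bool"
where
  "zariski_irreducible R madd sm Y \<longleftrightarrow>
     Y \<subseteq> Spec_M R madd sm \<and> Y \<noteq> {} \<and>
     (\<forall>F1\<in>zariski_closed R madd sm. \<forall>F2\<in>zariski_closed R madd sm.
        Y \<subseteq> F1 \<union> F2 \<longrightarrow> Y \<subseteq> F1 \<or> Y \<subseteq> F2)"

definition irreducible_components ::
  "('r, 'x) ring_scheme \<Rightarrow> ('m::complete_lattice \<Rightarrow> 'm \<Rightarrow> 'm) \<Rightarrow> ('r \<Rightarrow> 'm \<Rightarrow> 'm) \<Rightarrow> 'm set set"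
where
  "irreducible_components R madd sm =
     {Y. zariski_irreducible R madd sm Y \<and>
         (\<forall>Z. zariski_irreducible R madd sm Z \<and> Y \<subseteq> Z \<longrightarrow> Z = Y)}"

definition generic_point ::
  "('r, 'x) ring_scheme \<Rightarrow> ('m::complete_lattice \<Rightarrow> 'm \<Rightarrow> 'm) \<Rightarrow> ('r \<Rightarrow> 'm \<Rightarrow> 'm) \<Rightarrow> 'm set \<Rightarrow> 'm \<Rightarrow> bool"
where
  "generic_point R madd sm Y y \<longleftrightarrow> y \<in> Y \<and> Y = zariski_closure R madd sm {y}"

text \<open>The natural map psi(p) = (p:e)/Ann(M), an element (ideal) of R/Ann(M).\<close>
definition psi ::
  "('r, 'x) ring_scheme \<Rightarrow> ('r \<Rightarrow> 'm::complete_lattice \<Rightarrow> 'm) \<Rightarrow> 'm \<Rightarrow> 'm \<Rightarrow> 'r set set"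
where
  "psi R sm z p = (\<lambda>r. Ann R sm z +>\<^bsub>R\<^esub> r) ` colon_e R sm p"

definition minimal_primeideal :: "'a set \<Rightarrow> ('a, 'b) ring_scheme \<Rightarrow> bool"
where
  "minimal_primeideal P S \<longleftrightarrow>
     primeideal P S \<and> (\<forall>Q. primeideal Q S \<and> Q \<subseteq> P \<longrightarrow> Q = P)"

end

theory Submission
  imports Defs
begin

locale lemod = cring R for R :: "('r, 'x) ring_scheme" (structure) +
  fixes madd :: "'m::complete_lattice \<Rightarrow> 'm \<Rightarrow> 'm" and z :: 'm and sm :: "'r \<Rightarrow> 'm \<Rightarrow> 'm"
  assumes lm: "le_module R madd z sm"
begin

lemma madd_comm: "madd a b = madd b a" using lm[unfolded le_module_def, THEN conjunct2, THEN conjunct1] by metis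
lemma madd_z: "madd z a = a" using lm[unfolded le_module_def, THEN conjunct2, THEN conjunct2, THEN conjunct1] by metis
lemma madd_Sup: "S \<noteq> {} \<Longrightarrow> madd m (Sup S) = Sup (madd m ` S)" using lm[unfolded le_module_def, THEN conjunct2, THEN conjunct2, THEN conjunct2, THEN conjunct1] by metis
lemma sm_add: "r \<in> carrier R \<Longrightarrow> sm r (madd m1 m2) = madd (sm r m1) (sm r m2)" using lm[unfolded le_module_def, THEN conjunct2, THEN conjunct2, THEN conjunct2, THEN conjunct2, THEN conjunct1] by metis
lemma sm_radd: "r1 \<in> carrier R \<Longrightarrow> r2 \<in> carrier R \<Longrightarrow> sm (r1 \<oplus> r2) m \<le> madd (sm r1 m) (sm r2 m)" using lm[unfolded le_module_def, THEN conjunct2, THEN conjunct2, THEN conjunct2, THEN conjunct2, THEN conjunct2, THEN conjunct1] by metis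
lemma sm_mult: "r1 \<in> carrier R \<Longrightarrow> r2 \<in> carrier R \<Longrightarrow> sm (r1 \<otimes> r2) m = sm r1 (sm r2 m)" using lm[unfolded le_module_def, THEN conjunct2, THEN conjunct2, THEN conjunct2, THEN conjunct2, THEN conjunct2, THEN conjunct2, THEN conjunct1] by metis
lemma sm_one: "sm \<one> m = m" using lm[unfolded le_module_def, THEN conjunct2, THEN conjunct2, THEN conjunct2, THEN conjunct2, THEN conjunct2, THEN conjunct2, THEN conjunct2, THEN conjunct1] by metis
lemma sm_zero: "sm \<zero> m = z" using lm[unfolded le_module_def, THEN conjunct2, THEN conjunct2, THEN conjunct2, THEN conjunct2, THEN conjunct2, THEN conjunct2, THEN conjunct2, THEN conjunct2, THEN conjunct1] by metis
lemma sm_z: "r \<in> carrier R \<Longrightarrow> sm r z = z" using lm[unfolded le_module_def, THEN conjunct2, THEN conjunct2, THEN conjunct2, THEN conjunct2, THEN conjunct2, THEN conjunct2, THEN conjunct2, THEN conjunct2, THEN conjunct2, THEN conjunct1] by metis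
lemma sm_Sup: "r \<in> carrier R \<Longrightarrow> S \<noteq> {} \<Longrightarrow> sm r (Sup S) = Sup (sm r ` S)" using lm[unfolded le_module_def, THEN conjunct2, THEN conjunct2, THEN conjunct2, THEN conjunct2, THEN conjunct2, THEN conjunct2, THEN conjunct2, THEN conjunct2, THEN conjunct2, THEN conjunct2] by metis

lemma madd_mono: assumes "a \<le> b" shows "madd m a \<le> madd m b"
proof -
  have "Sup {a, b} = b" using assms by (simp add: sup_absorb2)
  then have "madd m b = Sup {madd m a, madd m b}" using madd_Sup[of "{a,b}" m] by simp
  then show ?thesis by (metis sup.cobounded1 Sup_insert Sup_empty sup_bot_right)
qed

lemma madd_mono2: "a \<le> b \<Longrightarrow> c \<le> d \<Longrightarrow> madd a c \<le> madd b d"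
  by (metis madd_mono madd_comm order_trans)

lemma sm_mono: assumes "r \<in> carrier R" "a \<le> b" shows "sm r a \<le> sm r b"
proof -
  have "Sup {a, b} = b" using assms by (simp add: sup_absorb2)
  then have "sm r b = Sup {sm r a, sm r b}" using sm_Sup[of r "{a,b}"] assms by simp
  then show ?thesis by (metis sup.cobounded1 Sup_insert Sup_empty sup_bot_right)
qed

lemma sub_z_le: "submodule_elem R madd sm n \<Longrightarrow> z \<le> n"
  unfolding submodule_elem_def by (metis sm_zero zero_closed)

lemma colon_ideal:
  assumes n: "submodule_elem R madd sm n"
  shows "ideal (colon_e R sm n) R"
proof -
  have nn: "madd n n \<le> n" and rn: "\<And>r. r \<in> carrier R \<Longrightarrow> sm r n \<le> n"
    using n unfolding submodule_elem_def by auto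
  have mulc: "x \<otimes> a \<in> colon_e R sm n" if "a \<in> colon_e R sm n" "x \<in> carrier R" for a x
  proof -
    have a: "a \<in> carrier R" "sm a Orderings.top \<le> n" using that unfolding colon_e_def by auto
    have "sm (x \<otimes> a) Orderings.top = sm x (sm a Orderings.top)" using sm_mult a that by simp
    also have "\<dots> \<le> sm x n" using sm_mono a that by simp
    also have "\<dots> \<le> n" using rn that by simp
    finally show ?thesis using a that unfolding colon_e_def by simp
  qed
  show ?thesis
  proof (rule idealI)
    show "ring R" by (rule ring_axioms)
    have sub: "colon_e R sm n \<subseteq> carrier R" unfolding colon_e_def by auto
    have zero: "\<zero> \<in> colon_e R sm n" unfolding colon_e_def using sm_zero sub_z_le[OF n] by simp
    have inv: "\<ominus> a \<in> colon_e R sm n" if a: "a \<in> colon_e R sm n" for a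
    proof -
      have ac: "a \<in> carrier R" using a unfolding colon_e_def by auto
      have "(\<ominus> \<one>) \<otimes> a \<in> colon_e R sm n" using mulc a by simp
      then show ?thesis using ac by (simp add: l_minus)
    qed
    have add: "a \<oplus> b \<in> colon_e R sm n" if a: "a \<in> colon_e R sm n" and b: "b \<in> colon_e R sm n" for a b
    proof -
      have ac: "a \<in> carrier R" "sm a Orderings.top \<le> n" "b \<in> carrier R" "sm b Orderings.top \<le> n"
        using a b unfolding colon_e_def by auto
      have "sm (a \<oplus> b) Orderings.top \<le> madd (sm a Orderings.top) (sm b Orderings.top)" using sm_radd ac by simp
      also have "\<dots> \<le> madd n n" using madd_mono2 ac by simp
      also have "\<dots> \<le> n" by (rule nn)
      finally show ?thesis using ac unfolding colon_e_def by simp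
    qed
    show "subgroup (colon_e R sm n) (add_monoid R)"
      apply (rule subgroup.intro)
      using sub zero inv add by (auto simp: a_inv_def[symmetric])
    show "\<And>a x. a \<in> colon_e R sm n \<Longrightarrow> x \<in> carrier R \<Longrightarrow> x \<otimes> a \<in> colon_e R sm n" by (rule mulc)
    show "\<And>a x. a \<in> colon_e R sm n \<Longrightarrow> x \<in> carrier R \<Longrightarrow> a \<otimes> x \<in> colon_e R sm n"
      using mulc m_comm unfolding colon_e_def by auto
  qed
qed


lemma sub_z: "submodule_elem R madd sm z"
  unfolding submodule_elem_def using madd_z sm_z by simp

lemma Ann_ideal: "ideal (Ann R sm z) R"
  unfolding Ann_def by (rule colon_ideal[OF sub_z])

lemma Ann_sub: "submodule_elem R madd sm n \<Longrightarrow> Ann R sm z \<subseteq> colon_e R sm n"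
  unfolding Ann_def colon_e_def using sub_z_le by (auto intro: order_trans)

lemma spec_sub: "p \<in> Spec_M R madd sm \<Longrightarrow> submodule_elem R madd sm p"
  unfolding Spec_M_def prime_submodule_elem_def by auto

lemma one_notin: "p \<in> Spec_M R madd sm \<Longrightarrow> \<one> \<notin> colon_e R sm p"
  unfolding Spec_M_def prime_submodule_elem_def colon_e_def using sm_one top.extremum_uniqueI by auto

lemma prime_colon:
  assumes p: "p \<in> Spec_M R madd sm"
  shows "primeideal (colon_e R sm p) R"
proof (rule primeidealI)
  show "ideal (colon_e R sm p) R" by (rule colon_ideal[OF spec_sub[OF p]])
  show "cring R" by (rule is_cring)
  show "carrier R \<noteq> colon_e R sm p" using one_notin[OF p] by auto
  fix a b assume a: "a \<in> carrier R" and b: "b \<in> carrier R" and ab: "a \<otimes> b \<in> colon_e R sm p"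
  then have "sm a (sm b Orderings.top) \<le> p" using sm_mult unfolding colon_e_def by auto
  then have "a \<in> colon_e R sm p \<or> sm b Orderings.top \<le> p"
    using p a unfolding Spec_M_def prime_submodule_elem_def by auto
  then show "a \<in> colon_e R sm p \<or> b \<in> colon_e R sm p" using b unfolding colon_e_def by auto
qed

lemma ae_sub: assumes a: "a \<in> carrier R" shows "submodule_elem R madd sm (sm a Orderings.top)"
proof -
  have "madd (sm a Orderings.top) (sm a Orderings.top) = sm a (madd Orderings.top Orderings.top)" using sm_add a by simp
  also have "\<dots> \<le> sm a Orderings.top" using sm_mono a by simp
  finally have 1: "madd (sm a Orderings.top) (sm a Orderings.top) \<le> sm a Orderings.top" .
  have 2: "sm r (sm a Orderings.top) \<le> sm a Orderings.top" if r: "r \<in> carrier R" for r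
  proof -
    have "sm r (sm a Orderings.top) = sm (r \<otimes> a) Orderings.top" using sm_mult r a by simp
    also have "\<dots> = sm a (sm r Orderings.top)" using sm_mult r a m_comm by simp
    also have "\<dots> \<le> sm a Orderings.top" using sm_mono a by simp
    finally show ?thesis .
  qed
  show ?thesis unfolding submodule_elem_def using 1 2 by auto
qed

lemma V_ae: assumes a: "a \<in> carrier R"
  shows "Vstar R madd sm (sm a Orderings.top) = {q \<in> Spec_M R madd sm. a \<in> colon_e R sm q}"
proof -
  have "a \<in> colon_e R sm (sm a Orderings.top)" using a unfolding colon_e_def by simp
  moreover have "colon_e R sm (sm a Orderings.top) \<subseteq> colon_e R sm q" if "a \<in> colon_e R sm q" for q
    using that unfolding colon_e_def by (auto intro: order_trans)
  ultimately show ?thesis unfolding Vstar_def by blast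
qed

lemma quot_eq_union:
  assumes "ideal I R" "ideal P R" "I \<subseteq> P"
  shows "\<Union> ((+>) I ` P) = P"
  using ideal_incl_iff[OF assms(1,2)] assms(3) by blast

lemma quot_mono:
  assumes "ideal I R" "ideal P R" "I \<subseteq> P" "ideal Q R" "I \<subseteq> Q"
    and "(+>) I ` P \<subseteq> (+>) I ` Q"
  shows "P \<subseteq> Q"
proof -
  have "\<Union> ((+>) I ` P) \<subseteq> \<Union> ((+>) I ` Q)" using assms(6) by (rule Union_mono)
  then show ?thesis using quot_eq_union[OF assms(1,2,3)] quot_eq_union[OF assms(1,4,5)] by simp
qed

lemma quot_prime:
  assumes I: "ideal I R" and P: "primeideal P R" and IP: "I \<subseteq> P"
  shows "primeideal ((+>) I ` P) (R Quot I)"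
proof -
  have Pi: "ideal P R" using P primeideal_def by blast
  have cq: "cring (R Quot I)" using ideal.quotient_is_cring[OF I is_cring] .
  have "carrier (R Quot I) = a_rcosets I" by (simp add: FactRing_def)
  also have "\<dots> = (\<Union>a\<in>carrier R. {I +> a})" using A_RCOSETS_def'[of R I] by simp
  also have "\<dots> = (+>) I ` carrier R" by blast
  finally have carr: "carrier (R Quot I) = (+>) I ` carrier R" .
  have mem: "u \<in> P" if "u \<in> carrier R" "I +> u \<in> (+>) I ` P" for u
  proof -
    have Psub: "P \<subseteq> carrier R" using ideal.Icarr[OF Pi] by blast
    have sub: "(+>) I ` P \<subseteq> carrier (R Quot I)" unfolding carr by (rule image_mono[OF Psub])
    have "u \<in> \<Union> ((+>) I ` P)" using canonical_proj_vimage_mem_iff[OF I sub that(1)] that(2) by simp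
    then show ?thesis using quot_eq_union[OF I Pi IP] by simp
  qed
  show ?thesis
  proof (rule primeidealI)
    show "ideal ((+>) I ` P) (R Quot I)" by (rule ring_ideal_imp_quot_ideal[OF I Pi])
    show "cring (R Quot I)" by (rule cq)
    show "carrier (R Quot I) \<noteq> (+>) I ` P"
    proof
      assume "carrier (R Quot I) = (+>) I ` P"
      then have "I +> \<one> \<in> (+>) I ` P" using carr by auto
      then have "\<one> \<in> P" using mem by simp
      then show False using P primeideal.I_notcarr ideal.one_imp_carrier Pi by metis
    qed
    fix a b assume a: "a \<in> carrier (R Quot I)" and b: "b \<in> carrier (R Quot I)"
      and ab: "a \<otimes>\<^bsub>R Quot I\<^esub> b \<in> (+>) I ` P"
    obtain x where x: "x \<in> carrier R" "a = I +> x" using a carr by auto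
    obtain y where y: "y \<in> carrier R" "b = I +> y" using b carr by auto
    have "a \<otimes>\<^bsub>R Quot I\<^esub> b = I +> (x \<otimes> y)"
      unfolding FactRing_def using ideal.rcoset_mult_add[OF I x(1) y(1)] x y by simp
    then have "x \<otimes> y \<in> P" using mem ab x y by simp
    then have "x \<in> P \<or> y \<in> P" using primeideal.I_prime[OF P x(1) y(1)] by simp
    then show "a \<in> (+>) I ` P \<or> b \<in> (+>) I ` P" using x y by auto
  qed
qed

lemma irr_prime:
  assumes Y: "zariski_irreducible R madd sm Y"
  shows "primeideal (\<Inter>q\<in>Y. colon_e R sm q) R" and "Ann R sm z \<subseteq> (\<Inter>q\<in>Y. colon_e R sm q)"
proof -
  have YS: "Y \<subseteq> Spec_M R madd sm" and Yne: "Y \<noteq> {}" using Y unfolding zariski_irreducible_def by auto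
  show "Ann R sm z \<subseteq> (\<Inter>q\<in>Y. colon_e R sm q)" using Ann_sub spec_sub YS by blast
  show "primeideal (\<Inter>q\<in>Y. colon_e R sm q) R"
  proof (rule primeidealI)
    show "ideal (\<Inter>q\<in>Y. colon_e R sm q) R"
      by (rule i_Intersect) (use YS Yne colon_ideal spec_sub in auto)
    show "cring R" by (rule is_cring)
    show "carrier R \<noteq> (\<Inter>q\<in>Y. colon_e R sm q)" using one_notin YS Yne by blast
    fix a b assume a: "a \<in> carrier R" and b: "b \<in> carrier R" and ab: "a \<otimes> b \<in> (\<Inter>q\<in>Y. colon_e R sm q)"
    have "Y \<subseteq> Vstar R madd sm (sm a Orderings.top) \<union> Vstar R madd sm (sm b Orderings.top)"
    proof
      fix q assume q: "q \<in> Y"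
      then have "a \<in> colon_e R sm q \<or> b \<in> colon_e R sm q"
        using primeideal.I_prime[OF prime_colon, of q a b] YS ab a b by blast
      then show "q \<in> Vstar R madd sm (sm a Orderings.top) \<union> Vstar R madd sm (sm b Orderings.top)"
        using V_ae a b q YS by auto
    qed
    moreover have "Vstar R madd sm (sm a Orderings.top) \<in> zariski_closed R madd sm"
      "Vstar R madd sm (sm b Orderings.top) \<in> zariski_closed R madd sm"
      unfolding zariski_closed_def using ae_sub a b by auto
    ultimately have "Y \<subseteq> Vstar R madd sm (sm a Orderings.top) \<or> Y \<subseteq> Vstar R madd sm (sm b Orderings.top)"
      using Y unfolding zariski_irreducible_def by blast
    then show "a \<in> (\<Inter>q\<in>Y. colon_e R sm q) \<or> b \<in> (\<Inter>q\<in>Y. colon_e R sm q)"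
      using V_ae a b by auto
  qed
qed

lemma V_self: "p \<in> Spec_M R madd sm \<Longrightarrow> p \<in> Vstar R madd sm p"
  unfolding Vstar_def by simp

lemma V_closed: "p \<in> Spec_M R madd sm \<Longrightarrow> Vstar R madd sm p \<in> zariski_closed R madd sm"
  unfolding zariski_closed_def using spec_sub by blast

lemma V_least: "p \<in> F \<Longrightarrow> F \<in> zariski_closed R madd sm \<Longrightarrow> Vstar R madd sm p \<subseteq> F"
  unfolding zariski_closed_def Vstar_def by auto

lemma V_irr: assumes p: "p \<in> Spec_M R madd sm" shows "zariski_irreducible R madd sm (Vstar R madd sm p)"
  unfolding zariski_irreducible_def
proof (intro conjI ballI impI)
  show "Vstar R madd sm p \<subseteq> Spec_M R madd sm" unfolding Vstar_def by auto
  show "Vstar R madd sm p \<noteq> {}" using V_self[OF p] by auto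
  fix F1 F2 assume F: "F1 \<in> zariski_closed R madd sm" "F2 \<in> zariski_closed R madd sm"
    "Vstar R madd sm p \<subseteq> F1 \<union> F2"
  then have "p \<in> F1 \<or> p \<in> F2" using V_self[OF p] by auto
  then show "Vstar R madd sm p \<subseteq> F1 \<or> Vstar R madd sm p \<subseteq> F2" using V_least F by blast
qed

lemma V_closure: assumes p: "p \<in> Spec_M R madd sm"
  shows "zariski_closure R madd sm {p} = Vstar R madd sm p"
proof
  show "zariski_closure R madd sm {p} \<subseteq> Vstar R madd sm p"
    unfolding zariski_closure_def using V_closed[OF p] V_self[OF p] by blast
  have "Vstar R madd sm p \<subseteq> Spec_M R madd sm" unfolding Vstar_def by blast
  moreover have "Vstar R madd sm p \<subseteq> \<Inter>{F \<in> zariski_closed R madd sm. {p} \<subseteq> F}"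
    using V_least by blast
  ultimately show "Vstar R madd sm p \<subseteq> zariski_closure R madd sm {p}"
    unfolding zariski_closure_def by blast
qed

lemma V_eq: "p \<in> Spec_M R madd sm \<Longrightarrow> q \<in> Spec_M R madd sm \<Longrightarrow> Vstar R madd sm p = Vstar R madd sm q
   \<Longrightarrow> colon_e R sm p = colon_e R sm q"
  using V_self unfolding Vstar_def by blast


lemma V_colon: "colon_e R sm p = colon_e R sm q \<Longrightarrow> Vstar R madd sm p = Vstar R madd sm q"
  unfolding Vstar_def by simp

lemma psi_eq: "psi R sm z p = (+>) (Ann R sm z) ` colon_e R sm p"
  unfolding psi_def by simp

lemma psi_prime: "p \<in> Spec_M R madd sm \<Longrightarrow> primeideal (psi R sm z p) (R Quot Ann R sm z)"
  unfolding psi_eq by (rule quot_prime[OF Ann_ideal prime_colon Ann_sub[OF spec_sub]])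

lemma psi_mono: "p \<in> Spec_M R madd sm \<Longrightarrow> q \<in> Spec_M R madd sm \<Longrightarrow> psi R sm z p \<subseteq> psi R sm z q
  \<Longrightarrow> colon_e R sm p \<subseteq> colon_e R sm q"
  unfolding psi_eq by (rule quot_mono[OF Ann_ideal colon_ideal[OF spec_sub] Ann_sub[OF spec_sub]
        colon_ideal[OF spec_sub] Ann_sub[OF spec_sub]])

end

locale lemod_surj = lemod +
  assumes surj: "{P. primeideal P (R Quot Ann R sm z)} \<subseteq> psi R sm z ` Spec_M R madd sm"
begin

lemma exists_prime:
  assumes P: "primeideal P R" and AP: "Ann R sm z \<subseteq> P"
  shows "\<exists>p\<in>Spec_M R madd sm. colon_e R sm p = P"
proof -
  have "primeideal ((+>) (Ann R sm z) ` P) (R Quot Ann R sm z)"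
    by (rule quot_prime[OF Ann_ideal P AP])
  then obtain p where p: "p \<in> Spec_M R madd sm" "(+>) (Ann R sm z) ` P = psi R sm z p"
    using surj by blast
  have Pi: "ideal P R" using P primeideal_def by blast
  have "colon_e R sm p = P"
    using quot_eq_union[OF Ann_ideal Pi AP] quot_eq_union[OF Ann_ideal colon_ideal[OF spec_sub[OF p(1)]]
      Ann_sub[OF spec_sub[OF p(1)]]] p(2) unfolding psi_eq by metis
  then show ?thesis using p by blast
qed

lemma irr_V:
  assumes Y: "zariski_irreducible R madd sm Y"
  shows "\<exists>p\<in>Spec_M R madd sm. Y \<subseteq> Vstar R madd sm p \<and> colon_e R sm p = (\<Inter>q\<in>Y. colon_e R sm q)"
proof -
  obtain p where p: "p \<in> Spec_M R madd sm" "colon_e R sm p = (\<Inter>q\<in>Y. colon_e R sm q)"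
    using exists_prime[OF irr_prime[OF Y]] by blast
  have "Y \<subseteq> Spec_M R madd sm" using Y unfolding zariski_irreducible_def by auto
  then have "Y \<subseteq> Vstar R madd sm p" unfolding Vstar_def using p(2) by auto
  then show ?thesis using p by blast
qed

lemma closed_irr_V:
  assumes C: "Y \<in> zariski_closed R madd sm" and Y: "zariski_irreducible R madd sm Y"
  shows "\<exists>p\<in>Spec_M R madd sm. Y = Vstar R madd sm p"
proof -
  obtain p where p: "p \<in> Spec_M R madd sm" "Y \<subseteq> Vstar R madd sm p"
    "colon_e R sm p = (\<Inter>q\<in>Y. colon_e R sm q)"
    using irr_V[OF Y] by blast
  obtain n where n: "Y = Vstar R madd sm n" using C unfolding zariski_closed_def by auto
  have "colon_e R sm n \<subseteq> colon_e R sm p" using p(3) n unfolding Vstar_def by auto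
  then have "Vstar R madd sm p \<subseteq> Y" using n unfolding Vstar_def by auto
  then show ?thesis using p by blast
qed

lemma comp_V:
  assumes "Y \<in> irreducible_components R madd sm"
  shows "\<exists>p\<in>Spec_M R madd sm. Y = Vstar R madd sm p"
proof -
  have Y: "zariski_irreducible R madd sm Y" and mx: "\<And>Z. zariski_irreducible R madd sm Z \<Longrightarrow> Y \<subseteq> Z \<Longrightarrow> Z = Y"
    using assms unfolding irreducible_components_def by auto
  obtain p where p: "p \<in> Spec_M R madd sm" "Y \<subseteq> Vstar R madd sm p" using irr_V[OF Y] by blast
  then show ?thesis using mx[OF V_irr[OF p(1)] p(2)] by metis
qed

lemma comp_char:
  assumes p: "p \<in> Spec_M R madd sm"
  shows "Vstar R madd sm p \<in> irreducible_components R madd sm \<longleftrightarrow>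
         minimal_primeideal (psi R sm z p) (R Quot Ann R sm z)"
proof
  assume C: "Vstar R madd sm p \<in> irreducible_components R madd sm"
  then have mx: "\<And>Z. zariski_irreducible R madd sm Z \<Longrightarrow> Vstar R madd sm p \<subseteq> Z \<Longrightarrow> Z = Vstar R madd sm p"
    unfolding irreducible_components_def by auto
  show "minimal_primeideal (psi R sm z p) (R Quot Ann R sm z)"
    unfolding minimal_primeideal_def
  proof (intro conjI allI impI)
    show "primeideal (psi R sm z p) (R Quot Ann R sm z)" by (rule psi_prime[OF p])
    fix Q assume Q: "primeideal Q (R Quot Ann R sm z) \<and> Q \<subseteq> psi R sm z p"
    then obtain q where q: "q \<in> Spec_M R madd sm" "Q = psi R sm z q" using surj by blast
    then have "colon_e R sm q \<subseteq> colon_e R sm p" using psi_mono p Q by blast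
    then have "Vstar R madd sm p \<subseteq> Vstar R madd sm q" unfolding Vstar_def by auto
    then have "Vstar R madd sm q = Vstar R madd sm p" using mx V_irr[OF q(1)] by blast
    then have "colon_e R sm q = colon_e R sm p" using V_eq p q(1) by blast
    then show "Q = psi R sm z p" using q(2) unfolding psi_eq by simp
  qed
next
  assume M: "minimal_primeideal (psi R sm z p) (R Quot Ann R sm z)"
  show "Vstar R madd sm p \<in> irreducible_components R madd sm"
    unfolding irreducible_components_def
  proof (intro CollectI conjI allI impI)
    show "zariski_irreducible R madd sm (Vstar R madd sm p)" by (rule V_irr[OF p])
    fix Z assume Z: "zariski_irreducible R madd sm Z \<and> Vstar R madd sm p \<subseteq> Z"
    obtain q where q: "q \<in> Spec_M R madd sm" "Z \<subseteq> Vstar R madd sm q"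
      "colon_e R sm q = (\<Inter>s\<in>Z. colon_e R sm s)"
      using irr_V Z by blast
    have "p \<in> Z" using Z V_self[OF p] by blast
    then have "colon_e R sm q \<subseteq> colon_e R sm p" using q(3) by blast
    then have "psi R sm z q \<subseteq> psi R sm z p" unfolding psi_eq by blast
    then have "psi R sm z q = psi R sm z p" using M psi_prime[OF q(1)] unfolding minimal_primeideal_def by blast
    then have "colon_e R sm q = colon_e R sm p" using psi_mono p q(1) by blast
    then have "Vstar R madd sm q = Vstar R madd sm p" by (rule V_colon)
    then show "Z = Vstar R madd sm p" using Z q(2) by blast
  qed
qed

lemma main:
  shows "(\<forall>Y. (Y \<in> zariski_closed R madd sm \<and> zariski_irreducible R madd sm Y) \<longleftrightarrow>
              (\<exists>p\<in>Spec_M R madd sm. Y = Vstar R madd sm p))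
     \<and> (\<forall>Y. Y \<in> zariski_closed R madd sm \<and> zariski_irreducible R madd sm Y \<longrightarrow>
              (\<exists>y. generic_point R madd sm Y y))
     \<and> (Vstar R madd sm ` Spec_M R madd sm =
          {Y \<in> zariski_closed R madd sm. zariski_irreducible R madd sm Y})
     \<and> (\<forall>Y\<in>irreducible_components R madd sm. \<exists>p\<in>Spec_M R madd sm. Y = Vstar R madd sm p)
     \<and> (\<forall>p\<in>Spec_M R madd sm. \<forall>q\<in>Spec_M R madd sm.
           Vstar R madd sm p = Vstar R madd sm q \<longrightarrow> psi R sm z p = psi R sm z q)
     \<and> bij_betw
         (\<lambda>Y. psi R sm z (SOME p. p \<in> Spec_M R madd sm \<and> Y = Vstar R madd sm p))
         (irreducible_components R madd sm)
         {P. minimal_primeideal P (R Quot Ann R sm z)}"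
proof -
  have P1: "\<forall>Y. (Y \<in> zariski_closed R madd sm \<and> zariski_irreducible R madd sm Y) \<longleftrightarrow>
              (\<exists>p\<in>Spec_M R madd sm. Y = Vstar R madd sm p)"
    using closed_irr_V V_closed V_irr by blast
  have P2: "\<forall>Y. Y \<in> zariski_closed R madd sm \<and> zariski_irreducible R madd sm Y \<longrightarrow>
              (\<exists>y. generic_point R madd sm Y y)"
  proof (intro allI impI)
    fix Y assume "Y \<in> zariski_closed R madd sm \<and> zariski_irreducible R madd sm Y"
    then obtain p where p: "p \<in> Spec_M R madd sm" "Y = Vstar R madd sm p" using closed_irr_V by blast
    then have "generic_point R madd sm Y p" unfolding generic_point_def using V_self V_closure by simp
    then show "\<exists>y. generic_point R madd sm Y y" by blast
  qed
  have P3: "Vstar R madd sm ` Spec_M R madd sm =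
          {Y \<in> zariski_closed R madd sm. zariski_irreducible R madd sm Y}"
    using P1 by blast
  have P5: "\<forall>p\<in>Spec_M R madd sm. \<forall>q\<in>Spec_M R madd sm.
           Vstar R madd sm p = Vstar R madd sm q \<longrightarrow> psi R sm z p = psi R sm z q"
    using V_eq unfolding psi_eq by metis
  define f where "f = (\<lambda>Y. psi R sm z (SOME p. p \<in> Spec_M R madd sm \<and> Y = Vstar R madd sm p))"
  have fV: "f (Vstar R madd sm p) = psi R sm z p" if p: "p \<in> Spec_M R madd sm" for p
  proof -
    let ?p = "SOME p'. p' \<in> Spec_M R madd sm \<and> Vstar R madd sm p = Vstar R madd sm p'"
    have "?p \<in> Spec_M R madd sm \<and> Vstar R madd sm p = Vstar R madd sm ?p"
      by (rule someI[of _ p]) (use p in simp)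
    then show ?thesis unfolding f_def using P5 p by metis
  qed
  have P6: "bij_betw f (irreducible_components R madd sm) {P. minimal_primeideal P (R Quot Ann R sm z)}"
    unfolding bij_betw_def
  proof (intro conjI)
    show "inj_on f (irreducible_components R madd sm)"
    proof (rule inj_onI)
      fix Y1 Y2 assume Y1: "Y1 \<in> irreducible_components R madd sm" and Y2: "Y2 \<in> irreducible_components R madd sm"
        and e: "f Y1 = f Y2"
      obtain p1 where p1: "p1 \<in> Spec_M R madd sm" "Y1 = Vstar R madd sm p1" using comp_V Y1 by blast
      obtain p2 where p2: "p2 \<in> Spec_M R madd sm" "Y2 = Vstar R madd sm p2" using comp_V Y2 by blast
      have ee: "psi R sm z p1 = psi R sm z p2" using e fV p1 p2 by simp
      have "colon_e R sm p1 \<subseteq> colon_e R sm p2" by (rule psi_mono[OF p1(1) p2(1)]) (simp add: ee)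
      moreover have "colon_e R sm p2 \<subseteq> colon_e R sm p1" by (rule psi_mono[OF p2(1) p1(1)]) (simp add: ee)
      ultimately have "colon_e R sm p1 = colon_e R sm p2" by (rule subset_antisym)
      from V_colon[OF this] show "Y1 = Y2" using p1(2) p2(2) by simp
    qed
    show "f ` irreducible_components R madd sm = {P. minimal_primeideal P (R Quot Ann R sm z)}"
    proof
      show "f ` irreducible_components R madd sm \<subseteq> {P. minimal_primeideal P (R Quot Ann R sm z)}"
      proof
        fix P assume "P \<in> f ` irreducible_components R madd sm"
        then obtain Y where Y: "Y \<in> irreducible_components R madd sm" "P = f Y" by blast
        obtain p where p: "p \<in> Spec_M R madd sm" "Y = Vstar R madd sm p" using comp_V Y by blast
        show "P \<in> {P. minimal_primeideal P (R Quot Ann R sm z)}" using comp_char[OF p(1)] Y p fV by simp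
      qed
      show "{P. minimal_primeideal P (R Quot Ann R sm z)} \<subseteq> f ` irreducible_components R madd sm"
      proof
        fix P assume "P \<in> {P. minimal_primeideal P (R Quot Ann R sm z)}"
        then have M: "minimal_primeideal P (R Quot Ann R sm z)" by simp
        then obtain p where p: "p \<in> Spec_M R madd sm" "P = psi R sm z p"
          using surj unfolding minimal_primeideal_def by blast
        then have "Vstar R madd sm p \<in> irreducible_components R madd sm" using comp_char M by simp
        then show "P \<in> f ` irreducible_components R madd sm" using fV p by (metis image_eqI)
      qed
    qed
  qed
  show ?thesis using P1 P2 P3 comp_V P5 P6 unfolding f_def by blast
qed

end

theorem theorem6p6:
  fixes R :: "('r, 'x) ring_scheme"
    and madd :: "'m::complete_lattice \<Rightarrow> 'm \<Rightarrow> 'm"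
    and z :: 'm
    and sm :: "'r \<Rightarrow> 'm \<Rightarrow> 'm"
  assumes "cring R"
    and "le_module R madd z sm"
    and "{P. primeideal P (R Quot Ann R sm z)} \<subseteq> psi R sm z ` Spec_M R madd sm"
  shows "(\<forall>Y. (Y \<in> zariski_closed R madd sm \<and> zariski_irreducible R madd sm Y) \<longleftrightarrow>
              (\<exists>p\<in>Spec_M R madd sm. Y = Vstar R madd sm p))
     \<and> (\<forall>Y. Y \<in> zariski_closed R madd sm \<and> zariski_irreducible R madd sm Y \<longrightarrow>
              (\<exists>y. generic_point R madd sm Y y))
     \<and> (Vstar R madd sm ` Spec_M R madd sm =
          {Y \<in> zariski_closed R madd sm. zariski_irreducible R madd sm Y})
     \<and> (\<forall>Y\<in>irreducible_components R madd sm. \<exists>p\<in>Spec_M R madd sm. Y = Vstar R madd sm p)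
     \<and> (\<forall>p\<in>Spec_M R madd sm. \<forall>q\<in>Spec_M R madd sm.
           Vstar R madd sm p = Vstar R madd sm q \<longrightarrow> psi R sm z p = psi R sm z q)
     \<and> bij_betw
         (\<lambda>Y. psi R sm z (SOME p. p \<in> Spec_M R madd sm \<and> Y = Vstar R madd sm p))
         (irreducible_components R madd sm)
         {P. minimal_primeideal P (R Quot Ann R sm z)}"
proof -
  interpret lemod_surj R madd z sm
    by (intro lemod_surj.intro lemod.intro lemod_axioms.intro lemod_surj_axioms.intro assms)
  show ?thesis by (rule main)
qed

end
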